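(* Let $f:[a,b]\to\mathbb{Q}_Q(\mathbb{R}^n)$ be continuous, let $x_0\in(a,b)$, and suppose $f$ is strongly affinely approximatable at $x_0$. Then there exist continuous functions $f_1,\dots,f_Q:[a,b]\to\mathbb{R}^n$ such that $f(x)=\sum_{i=1}^Q[[f_i(x)]]$ for all $x\in[a,b]$ and each $f_i$ is differentiable at $x_0$.
   Context: $\mathbb{Q}_Q(\mathbb{R}^n)$ denotes the set of unordered $Q$-tuples $\sum_{i=1}^Q[[a_i]]$ of points of $\mathbb{R}^n$ (two such sums are equal iff the tuples agree up to a permutation), with metric $\mathcal{G}\big(\sum_i[[a_i]],\sum_i[[b_i]]\big)=\min_{\sigma}\big(\sum_{i}|a_i-b_{\sigma(i)}|^2\big)^{1/2}$ over permutations $\sigma$. A function $f:[a,b]\to\mathbb{Q}_Q(\mathbb{R}^n)$ is affinely approximatable at $x_0$ if there are affine maps $A_1,\dots,A_Q:\mathbb{R}\to\mathbb{R}^n$ with $\lim_{x\to x_0}\mathcal{G}\big(f(x),\sum_{i=1}^Q[[A_i(x)]]\big)/|x-x_0|=0$; it is strongly affinely approximatable at $x_0$ if moreover these maps can be chosen so that $A_i=A_j$ whenever $A_i(x_0)=A_j(x_0)$. *)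

theory Defs
  imports "HOL-Analysis.Analysis" "HOL-Library.Multiset"
begin

text \<open>Unordered Q-tuples of points of a normed space are multisets of size Q.
  The metric G: minimum over orderings (equivalently permutations) of the l2 distance.\<close>

definition Gdist :: "'a::real_normed_vector multiset \<Rightarrow> 'a multiset \<Rightarrow> real" where
  "Gdist A B = Inf {sqrt (\<Sum>i<length as. (norm (as ! i - bs ! i))\<^sup>2) | as bs.
                     mset as = A \<and> mset bs = B}"

definition qpt :: "nat \<Rightarrow> (nat \<Rightarrow> 'b \<Rightarrow> 'a) \<Rightarrow> 'b \<Rightarrow> 'a multiset" where
  "qpt Q g x = mset (map (\<lambda>i. g i x) [0..<Q])"

definition qcontinuous_on :: "real set \<Rightarrow> (real \<Rightarrow> 'a::real_normed_vector multiset) \<Rightarrow> bool" where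
  "qcontinuous_on S f \<longleftrightarrow>
     (\<forall>x\<in>S. \<forall>e>0. \<exists>d>0. \<forall>y\<in>S. \<bar>y - x\<bar> < d \<longrightarrow> Gdist (f y) (f x) < e)"

definition affinely_approximatable ::
  "nat \<Rightarrow> real set \<Rightarrow> (real \<Rightarrow> 'a::real_normed_vector multiset) \<Rightarrow> real \<Rightarrow> bool" where
  "affinely_approximatable Q S f x0 \<longleftrightarrow>
     (\<exists>c v :: nat \<Rightarrow> 'a.
        ((\<lambda>x. Gdist (f x) (qpt Q (\<lambda>i x. c i + x *\<^sub>R v i) x) / \<bar>x - x0\<bar>) \<longlongrightarrow> 0)
          (at x0 within S))"

definition strongly_affinely_approximatable ::
  "nat \<Rightarrow> real set \<Rightarrow> (real \<Rightarrow> 'a::real_normed_vector multiset) \<Rightarrow> real \<Rightarrow> bool" where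
  "strongly_affinely_approximatable Q S f x0 \<longleftrightarrow>
     (\<exists>c v :: nat \<Rightarrow> 'a.
        ((\<lambda>x. Gdist (f x) (qpt Q (\<lambda>i x. c i + x *\<^sub>R v i) x) / \<bar>x - x0\<bar>) \<longlongrightarrow> 0)
          (at x0 within S) \<and>
        (\<forall>i<Q. \<forall>j<Q. c i + x0 *\<^sub>R v i = c j + x0 *\<^sub>R v j \<longrightarrow> c i = c j \<and> v i = v j))"

end

theory Submission
  imports Defs "HOL-Combinatorics.Multiset_Permutations"
begin

definition costz :: "('a::real_normed_vector \<times> 'a) list \<Rightarrow> real" where
  "costz zs = sqrt (sum_list (map (\<lambda>z. (norm (fst z - snd z))\<^sup>2) zs))"

lemma cost_zip:
  assumes "length as = length bs"
  shows "sqrt (\<Sum>i<length as. (norm (as ! i - bs ! i))\<^sup>2) = costz (zip as bs)"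
proof -
  have "sum_list (map (\<lambda>z. (norm (fst z - snd z))\<^sup>2) (zip as bs))
        = (\<Sum>i = 0..<length as. (norm (as ! i - bs ! i))\<^sup>2)"
    by (subst sum_list_sum_nth) (simp add: assms)
  then show ?thesis unfolding costz_def by (simp add: atLeast0LessThan)
qed

lemma Gdist_set_eq:
  "{sqrt (\<Sum>i<length as. (norm (as ! i - bs ! i))\<^sup>2) | as bs. mset as = A \<and> mset bs = B}
   = (\<lambda>(as,bs). sqrt (\<Sum>i<length as. (norm (as ! i - bs ! i))\<^sup>2)) `
       (permutations_of_multiset A \<times> permutations_of_multiset B)"
  by (auto simp: permutations_of_multiset_def)

lemma Gdist_set_fin:
  "finite {sqrt (\<Sum>i<length as. (norm (as ! i - bs ! i))\<^sup>2) | as bs. mset as = A \<and> mset bs = B}"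
  unfolding Gdist_set_eq by simp

lemma Gdist_set_ne:
  "{sqrt (\<Sum>i<length as. (norm (as ! i - bs ! i))\<^sup>2) | as bs. mset as = A \<and> mset bs = B} \<noteq> {}"
  using ex_mset[of A] ex_mset[of B] by blast

lemma Gdist_le:
  assumes "mset as = A" "mset bs = B" "length as = length bs"
  shows "Gdist A B \<le> costz (zip as bs)"
proof -
  have "Gdist A B \<le> sqrt (\<Sum>i<length as. (norm (as ! i - bs ! i))\<^sup>2)"
    unfolding Gdist_def
  proof (rule cInf_lower)
    show "bdd_below {sqrt (\<Sum>i<length as. (norm (as ! i - bs ! i))\<^sup>2) | as bs. mset as = A \<and> mset bs = B}"
      by (rule bdd_below_finite[OF Gdist_set_fin])
  qed (use assms in blast)
  then show ?thesis using cost_zip[OF assms(3)] by simp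
qed

lemma Gdist_att:
  assumes "size A = (size B :: nat)"
  obtains as bs where "mset as = A" "mset bs = B" "length as = length bs"
    "Gdist A B = costz (zip as bs)"
proof -
  let ?S = "{sqrt (\<Sum>i<length as. (norm (as ! i - bs ! i))\<^sup>2) | as bs. mset as = A \<and> mset bs = B}"
  have "Gdist A B \<in> ?S"
    unfolding Gdist_def using Gdist_set_fin[of A B] Gdist_set_ne[of A B]
    by (metis (no_types, lifting) Min_in cInf_eq_Min)
  then obtain as bs where h: "mset as = A" "mset bs = B"
    "Gdist A B = sqrt (\<Sum>i<length as. (norm (as ! i - bs ! i))\<^sup>2)" by blast
  have l: "length as = length bs" using h assms by (metis size_mset)
  show ?thesis using that[OF h(1,2) l] h(3) cost_zip[OF l] by simp
qed

lemma Gdist_nonneg: "Gdist A B \<ge> 0"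
  unfolding Gdist_def
  by (rule cInf_greatest) (use Gdist_set_ne in \<open>auto intro!: sum_nonneg\<close>)

lemma sum_list_mem_le:
  fixes g :: "'b \<Rightarrow> real"
  assumes "x \<in> set xs" "\<And>y. g y \<ge> 0"
  shows "g x \<le> sum_list (map g xs)"
  using assms(1)
proof (induction xs)
  case Nil then show ?case by simp
next
  case (Cons a xs)
  have "0 \<le> sum_list (map g xs)" by (rule sum_list_nonneg) (use assms(2) in auto)
  then show ?case using Cons assms(2)[of a] by auto
qed

lemma costz_pair:
  assumes "z \<in> set zs"
  shows "norm (fst z - snd z) \<le> costz zs"
proof -
  have "(norm (fst z - snd z))\<^sup>2 \<le> sum_list (map (\<lambda>z. (norm (fst z - snd z))\<^sup>2) zs)"
    by (rule sum_list_mem_le[OF assms]) simp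
  then show ?thesis unfolding costz_def by (simp add: real_le_rsqrt)
qed


lemma sum_list_filter_le:
  fixes g :: "'b \<Rightarrow> real"
  assumes "\<And>y. g y \<ge> 0"
  shows "sum_list (map g (filter P xs)) \<le> sum_list (map g xs)"
proof (induction xs)
  case Nil then show ?case by simp
next
  case (Cons a xs) then show ?case using assms[of a] by auto
qed

lemma costz_filter: "costz (filter P zs) \<le> costz zs"
  unfolding costz_def by (rule real_sqrt_le_mono, rule sum_list_filter_le) simp

lemma PT:
  assumes "size A = size B" "w \<in># A"
  shows "\<exists>u. u \<in># B \<and> norm (w - u) \<le> Gdist A B"
proof -
  obtain as bs where h: "mset as = A" "mset bs = B" "length as = length bs"
    "Gdist A B = costz (zip as bs)" using Gdist_att[OF assms(1)] by blast
  have "w \<in> set as" using assms(2) h(1) by auto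
  then obtain i where i: "i < length as" "as ! i = w" by (auto simp: in_set_conv_nth)
  have z: "(as ! i, bs ! i) \<in> set (zip as bs)" using i h(3) by (auto simp: in_set_zip)
  have "bs ! i \<in> set bs" using h(3) i by simp
  then have "bs ! i \<in># B" using h(2) by auto
  moreover have "norm (w - bs ! i) \<le> Gdist A B" using costz_pair[OF z] h(4) i by simp
  ultimately show ?thesis by blast
qed

lemma PT2:
  assumes "size A = size B" "u \<in># B"
  shows "\<exists>w. w \<in># A \<and> norm (w - u) \<le> Gdist A B"
proof -
  obtain as bs where h: "mset as = A" "mset bs = B" "length as = length bs"
    "Gdist A B = costz (zip as bs)" using Gdist_att[OF assms(1)] by blast
  have "u \<in> set bs" using assms(2) h(2) by auto
  then obtain i where i: "i < length bs" "bs ! i = u" by (auto simp: in_set_conv_nth)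
  have z: "(as ! i, bs ! i) \<in> set (zip as bs)" using i h(3) by (auto simp: in_set_zip)
  have "as ! i \<in> set as" using h(3) i by simp
  then have "as ! i \<in># A" using h(1) by auto
  moreover have "norm (as ! i - u) \<le> Gdist A B" using costz_pair[OF z] h(4) i by simp
  ultimately show ?thesis by blast
qed

lemma mset_map_filter:
  "mset (map f (filter (P \<circ> f) zs)) = filter_mset P (mset (map f zs))"
  by (induction zs) auto

lemma FILT:
  assumes "mset as = A" "mset bs = B" "length as = length bs"
    and eq: "\<And>z. z \<in> set (zip as bs) \<Longrightarrow> P (fst z) \<longleftrightarrow> P' (snd z)"
  shows "Gdist (filter_mset P A) (filter_mset P' B) \<le> costz (zip as bs)"
    and "size (filter_mset P A) = size (filter_mset P' B)"
proof -
  let ?zs = "filter (P \<circ> fst) (zip as bs)"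
  have f2: "?zs = filter (P' \<circ> snd) (zip as bs)"
    by (rule filter_cong) (use eq in auto)
  have m1: "mset (map fst ?zs) = filter_mset P A"
    using assms(1,3) mset_map_filter[of fst P "zip as bs"] by simp
  have m2: "mset (map snd ?zs) = filter_mset P' B"
    using assms(2,3) mset_map_filter[of snd P' "zip as bs"] by (simp add: f2)
  have "Gdist (filter_mset P A) (filter_mset P' B) \<le> costz (zip (map fst ?zs) (map snd ?zs))"
    by (rule Gdist_le[OF m1 m2]) simp
  also have "\<dots> \<le> costz (zip as bs)" by (simp add: zip_map_fst_snd costz_filter)
  finally show "Gdist (filter_mset P A) (filter_mset P' B) \<le> costz (zip as bs)" .
  show "size (filter_mset P A) = size (filter_mset P' B)"
    by (simp flip: m1 m2)
qed

lemma size_qpt[simp]: "size (qpt Q g x) = Q"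
  by (simp add: qpt_def)

lemma qpt_mem: "i < Q \<Longrightarrow> g i x \<in># qpt Q g x"
  by (simp add: qpt_def)

lemma qpt_set: "set_mset (qpt Q g x) = (\<lambda>i. g i x) ` {..<Q}"
  by (auto simp: qpt_def)

lemma qpt_cong: "(\<And>i. i < Q \<Longrightarrow> g i x = h i y) \<Longrightarrow> qpt Q g x = qpt Q h y"
  unfolding qpt_def by (intro arg_cong[where f=mset] map_cong) auto

lemma qpt_perm:
  assumes "p permutes {..<Q}"
  shows "qpt Q (\<lambda>i. g (p i)) x = qpt Q g x"
proof -
  have pl: "\<And>i. i<Q \<Longrightarrow> p i < Q" using permutes_in_image[OF assms] by simp
  have "map (\<lambda>i. g (p i) x) [0..<Q] = permute_list p (map (\<lambda>i. g i x) [0..<Q])"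
    by (rule nth_equalityI) (use assms in \<open>auto simp: permute_list_nth pl\<close>)
  moreover have pp: "p permutes {..<length (map (\<lambda>i. g i x) [0..<Q])}" using assms by simp
  ultimately show ?thesis unfolding qpt_def using mset_permute_list[OF pp] by simp
qed

lemma qpt_match:
  assumes "qpt Q g t = qpt Q h t"
  obtains p where "p permutes {..<Q}" "\<And>i. i < Q \<Longrightarrow> h (p i) t = g i t"
proof -
  have "mset (map (\<lambda>i. g i t) [0..<Q]) = mset (map (\<lambda>i. h i t) [0..<Q])"
    using assms by (simp add: qpt_def)
  then obtain p where p: "p permutes {..<length (map (\<lambda>i. h i t) [0..<Q])}"
    "permute_list p (map (\<lambda>i. h i t) [0..<Q]) = map (\<lambda>i. g i t) [0..<Q]"
    by (rule mset_eq_permutation)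
  have pQ: "p permutes {..<Q}" using p(1) by simp
  show ?thesis
  proof (rule that[OF pQ])
    fix i assume i: "i < Q"
    have "permute_list p (map (\<lambda>i. h i t) [0..<Q]) ! i = map (\<lambda>i. g i t) [0..<Q] ! i"
      using p(2) by simp
    moreover have "p i < Q" using permutes_in_image[OF pQ] i by simp
    ultimately show "h (p i) t = g i t" using i pQ
      by (simp add: permute_list_nth)
  qed
qed

lemma qpt_const: "qpt Q (\<lambda>i _. p) x = replicate_mset Q p"
  by (simp add: qpt_def map_replicate_const)

lemma qpt_split:
  assumes "k \<le> Q"
  shows "qpt Q (\<lambda>i. if i < k then gA i else gB (i - k)) x = qpt k gA x + qpt (Q - k) gB x"
proof -
  have "[0..<k + (Q-k)] = [0..<k] @ [k..<k+(Q-k)]" by (rule upt_add_eq_append) simp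
  then have "[0..<Q] = [0..<k] @ [k..<Q]" using assms by simp
  moreover have "map (\<lambda>i. (if i < k then gA i else gB (i - k)) x) [k..<Q] = map (\<lambda>i. gB i x) [0..<Q-k]"
    by (rule nth_equalityI) auto
  moreover have "map (\<lambda>i. (if i < k then gA i else gB (i - k)) x) [0..<k] = map (\<lambda>i. gA i x) [0..<k]"
    by auto
  ultimately show ?thesis unfolding qpt_def by (simp, intro image_mset_cong, simp)
qed

lemma qpt_exists:
  assumes "size M = Q"
  obtains g where "M = qpt Q (\<lambda>i _. g i) x"
proof -
  obtain as where as: "mset as = M" using ex_mset by blast
  have "length as = Q" using as assms by auto
  then have "M = qpt Q (\<lambda>i _. as ! i) x" unfolding qpt_def using as
    by (metis map_nth)
  then show ?thesis using that by blast
qed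


definition sel :: "nat \<Rightarrow> (real \<Rightarrow> 'a::real_normed_vector multiset) \<Rightarrow> real set \<Rightarrow> (nat \<Rightarrow> real \<Rightarrow> 'a) \<Rightarrow> bool" where
  "sel Q f S fs \<longleftrightarrow> (\<forall>i<Q. continuous_on S (fs i)) \<and> (\<forall>y\<in>S. f y = qpt Q fs y)"

lemma sel_mono: "sel Q f S fs \<Longrightarrow> T \<subseteq> S \<Longrightarrow> sel Q f T fs"
  unfolding sel_def by (meson continuous_on_subset subsetD)

lemma sel_perm:
  assumes "sel Q f S fs" "p permutes {..<Q}"
  shows "sel Q f S (\<lambda>i. fs (p i))"
proof -
  have pl: "\<And>i. i<Q \<Longrightarrow> p i < Q" using permutes_in_image[OF assms(2)] by simp
  have "qpt Q (\<lambda>i. fs (p i)) y = qpt Q fs y" for y by (rule qpt_perm[OF assms(2)])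
  then show ?thesis using assms(1) pl unfolding sel_def by simp
qed

lemma sel_point:
  assumes "size (f t) = Q"
  shows "\<exists>fs. sel Q f {t..t} fs"
proof -
  obtain g where eq: "f t = qpt Q (\<lambda>i _. g i) t" by (rule qpt_exists[OF assms])
  have "\<forall>y\<in>{t..t}. f y = qpt Q (\<lambda>i _. g i) y"
  proof
    fix y :: real assume "y \<in> {t..t}"
    then have "y = t" by simp
    then show "f y = qpt Q (\<lambda>i _. g i) y" using eq by simp
  qed
  then have "sel Q f {t..t} (\<lambda>i _. g i)" unfolding sel_def by (simp add: continuous_on_const)
  then show ?thesis by blast
qed

lemma glue_R:
  assumes "c \<le> t" "t \<le> d" "sel Q f {c..t} g" "sel Q f {t..d} h"
  shows "\<exists>F. sel Q f {c..d} F \<and> (\<forall>i<Q. \<forall>y\<in>{c..t}. F i y = g i y)"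
proof -
  have "t \<in> {c..t}" "t \<in> {t..d}" using assms by auto
  then have "qpt Q g t = qpt Q h t" using assms(3,4) unfolding sel_def by metis
  then obtain p where p: "p permutes {..<Q}" "\<And>i. i < Q \<Longrightarrow> h (p i) t = g i t"
    by (rule qpt_match) blast
  have h': "sel Q f {t..d} (\<lambda>i. h (p i))" by (rule sel_perm[OF assms(4) p(1)])
  define F where "F = (\<lambda>i y. if y \<le> t then g i y else h (p i) y)"
  have "continuous_on ({c..t} \<union> {t..d}) (F i)" if i: "i < Q" for i
  proof (rule continuous_on_closed_Un)
    show "continuous_on {c..t} (F i)"
      using assms(3) i unfolding sel_def by (auto intro: continuous_on_eq simp: F_def)
    have "continuous_on {t..d} (\<lambda>y. h (p i) y)" using h' i unfolding sel_def by auto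
    then show "continuous_on {t..d} (F i)"
      by (rule continuous_on_eq) (use p(2)[OF i] in \<open>auto simp: F_def\<close>)
  qed auto
  moreover have "{c..t} \<union> {t..d} = {c..d}" using assms by auto
  moreover have "f y = qpt Q F y" if "y \<in> {c..d}" for y
  proof (cases "y \<le> t")
    case True
    then have "qpt Q F y = qpt Q g y" by (intro qpt_cong) (simp add: F_def)
    then show ?thesis using assms(3) that True unfolding sel_def by auto
  next
    case False
    then have "qpt Q F y = qpt Q (\<lambda>i. h (p i)) y" by (intro qpt_cong) (simp add: F_def)
    then show ?thesis using h' that False unfolding sel_def by auto
  qed
  ultimately have "sel Q f {c..d} F" unfolding sel_def by auto
  moreover have "\<forall>i<Q. \<forall>y\<in>{c..t}. F i y = g i y" by (simp add: F_def)
  ultimately show ?thesis by blast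
qed

lemma glue_L:
  assumes "c \<le> t" "t \<le> d" "sel Q f {c..t} h" "sel Q f {t..d} g"
  shows "\<exists>F. sel Q f {c..d} F \<and> (\<forall>i<Q. \<forall>y\<in>{t..d}. F i y = g i y)"
proof -
  have "t \<in> {c..t}" "t \<in> {t..d}" using assms by auto
  then have "qpt Q g t = qpt Q h t" using assms(3,4) unfolding sel_def by metis
  then obtain p where p: "p permutes {..<Q}" "\<And>i. i < Q \<Longrightarrow> h (p i) t = g i t"
    by (rule qpt_match) blast
  have h': "sel Q f {c..t} (\<lambda>i. h (p i))" by (rule sel_perm[OF assms(3) p(1)])
  define F where "F = (\<lambda>i y. if y < t then h (p i) y else g i y)"
  have "continuous_on ({c..t} \<union> {t..d}) (F i)" if i: "i < Q" for i
  proof (rule continuous_on_closed_Un)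
    show "continuous_on {t..d} (F i)"
      using assms(4) i unfolding sel_def by (auto intro: continuous_on_eq simp: F_def)
    have "continuous_on {c..t} (\<lambda>y. h (p i) y)" using h' i unfolding sel_def by auto
    then show "continuous_on {c..t} (F i)"
      by (rule continuous_on_eq) (use p(2)[OF i] in \<open>auto simp: F_def\<close>)
  qed auto
  moreover have "{c..t} \<union> {t..d} = {c..d}" using assms by auto
  moreover have "f y = qpt Q F y" if "y \<in> {c..d}" for y
  proof (cases "y < t")
    case False
    then have "qpt Q F y = qpt Q g y" by (intro qpt_cong) (simp add: F_def)
    then show ?thesis using assms(4) that False unfolding sel_def by auto
  next
    case True
    then have "qpt Q F y = qpt Q (\<lambda>i. h (p i)) y" by (intro qpt_cong) (simp add: F_def)
    then show ?thesis using h' that True unfolding sel_def by auto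
  qed
  ultimately have "sel Q f {c..d} F" unfolding sel_def by auto
  moreover have "\<forall>i<Q. \<forall>y\<in>{t..d}. F i y = g i y" by (simp add: F_def)
  ultimately show ?thesis by blast
qed

lemma sel_ext:
  assumes "c' \<le> c" "c \<le> d" "d \<le> d'" "sel Q f {c..d} g" "sel Q f {c'..d'} h"
  shows "\<exists>F. sel Q f {c'..d'} F \<and> (\<forall>i<Q. \<forall>y\<in>{c..d}. F i y = g i y)"
proof -
  have "sel Q f {c'..c} h" by (rule sel_mono[OF assms(5)]) (use assms in auto)
  then obtain F1 where F1: "sel Q f {c'..d} F1" "\<forall>i<Q. \<forall>y\<in>{c..d}. F1 i y = g i y"
    using glue_L[OF assms(1,2) _ assms(4)] by blast
  have "sel Q f {d..d'} h" by (rule sel_mono[OF assms(5)]) (use assms in auto)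
  then obtain F where F: "sel Q f {c'..d'} F" "\<forall>i<Q. \<forall>y\<in>{c'..d}. F i y = F1 i y"
    using glue_R[OF _ assms(3) F1(1)] assms by fastforce
  show ?thesis using F F1 assms by auto
qed


lemma isCont_local:
  assumes "open U" "y \<in> U" "\<And>z. z \<in> U \<Longrightarrow> F z = G z" "continuous_on U G"
  shows "isCont F y"
proof -
  have "isCont G y" using assms continuous_on_eq_continuous_at by blast
  moreover have "eventually (\<lambda>z. F z = G z) (nhds y)"
    unfolding eventually_nhds using assms by blast
  ultimately show ?thesis using isCont_cong by blast
qed

lemma seq_right:
  fixes J :: "real set"
  assumes "open J" "is_interval J" "x0 \<in> J"
  shows "\<exists>d::nat\<Rightarrow>real. (\<forall>k. d k \<le> d (Suc k)) \<and> (\<forall>k. d k \<in> J \<and> x0 \<le> d k) \<and> (\<forall>y\<in>J. \<exists>k. y < d k)"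
proof (cases "bdd_above J")
  case True
  define s where "s = Sup J"
  have up: "y \<le> s" if "y \<in> J" for y using True that unfolding s_def by (simp add: cSup_upper)
  have sJ: "s \<notin> J"
  proof
    assume "s \<in> J"
    then obtain e where e: "e > 0" "ball s e \<subseteq> J" using assms(1) open_contains_ball by blast
    then have "s + e/2 \<in> J" by (auto simp: dist_real_def)
    then show False using up[of "s + e/2"] e by simp
  qed
  have lt: "y < s" if "y \<in> J" for y using up[OF that] sJ that by (metis order_less_le)
  have x0s: "x0 < s" by (rule lt[OF assms(3)])
  define d where "d = (\<lambda>k::nat. s - (s - x0) / (real k + 1))"
  have mono: "d k \<le> d (Suc k)" for k
    unfolding d_def using x0s by (auto intro!: divide_left_mono simp: field_simps)
  have dx: "x0 \<le> d k" for k
  proof -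
    have "(s - x0) / (real k + 1) \<le> s - x0" using x0s
      by (simp add: field_simps mult_right_mono less_imp_le)
    then show ?thesis unfolding d_def by simp
  qed
  have ds: "d k < s" for k unfolding d_def using x0s by simp
  have dJ: "d k \<in> J" for k
  proof -
    obtain z where z: "z \<in> J" "d k < z" using less_cSupD[of J "d k"] ds[of k] assms(3)
      unfolding s_def by blast
    show ?thesis using assms(2) z assms(3) dx[of k] unfolding is_interval_1 by (meson less_imp_le)
  qed
  have ev: "\<exists>k. y < d k" if "y \<in> J" for y
  proof -
    have sy: "s - y > 0" using lt[OF that] by simp
    obtain k :: nat where k: "(s - x0) / (s - y) < real k" using reals_Archimedean2 by blast
    have "(s - x0) < real k * (s - y)" using k sy by (simp add: field_simps)
    then have "(s - x0) < (real k + 1) * (s - y)" using sy by (simp add: algebra_simps)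
    then have "(s - x0) / (real k + 1) < s - y" by (simp add: field_simps)
    then show ?thesis unfolding d_def by (intro exI[of _ k]) simp
  qed
  show ?thesis using mono dx dJ ev by blast
next
  case False
  define d where "d = (\<lambda>k::nat. x0 + real k)"
  have dJ: "d k \<in> J" for k
  proof -
    obtain z where z: "z \<in> J" "d k < z" using False unfolding bdd_above_def
      by (meson not_le)
    show ?thesis using assms(2) z assms(3) unfolding is_interval_1 d_def
      by (meson less_imp_le le_add_same_cancel1 of_nat_0_le_iff)
  qed
  have ev: "\<exists>k. y < d k" if "y \<in> J" for y
  proof -
    obtain k :: nat where k: "y - x0 < real k" using reals_Archimedean2 by blast
    then show ?thesis unfolding d_def by (intro exI[of _ k]) simp
  qed
  have "\<forall>k. d k \<le> d (Suc k)" "\<forall>k. d k \<in> J \<and> x0 \<le> d k" using dJ unfolding d_def by auto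
  then show ?thesis using ev by blast
qed

lemma seq_left:
  fixes J :: "real set"
  assumes "open J" "is_interval J" "x0 \<in> J"
  shows "\<exists>c::nat\<Rightarrow>real. (\<forall>k. c (Suc k) \<le> c k) \<and> (\<forall>k. c k \<in> J \<and> c k \<le> x0) \<and> (\<forall>y\<in>J. \<exists>k. c k < y)"
proof -
  have "open (uminus ` J)" using open_negations[OF assms(1)] by simp
  moreover have "is_interval (uminus ` J)" using assms(2) by simp
  moreover have "- x0 \<in> uminus ` J" using assms(3) by simp
  ultimately obtain d :: "nat \<Rightarrow> real" where d: "\<forall>k. d k \<le> d (Suc k)"
    "\<forall>k. d k \<in> uminus ` J \<and> - x0 \<le> d k" "\<forall>y\<in>uminus ` J. \<exists>k. y < d k"
    using seq_right by blast
  have "\<forall>k. - d (Suc k) \<le> - d k" using d(1) by simp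
  moreover have "\<forall>k. - d k \<in> J \<and> - d k \<le> x0"
  proof
    fix k
    obtain z where "z \<in> J" "d k = - z" using d(2) by blast
    moreover have "- x0 \<le> d k" using d(2) by blast
    ultimately show "- d k \<in> J \<and> - d k \<le> x0" by auto
  qed
  moreover have "\<forall>y\<in>J. \<exists>k. - d k < y"
  proof
    fix y assume "y \<in> J"
    then have "- y \<in> uminus ` J" by simp
    then obtain k where "- y < d k" using d(3) by blast
    then show "\<exists>k. - d k < y" by (intro exI[of _ k]) simp
  qed
  ultimately show ?thesis by (intro exI[of _ "\<lambda>k. - d k"]) simp
qed


lemma EXH:
  fixes J :: "real set" and f :: "real \<Rightarrow> 'a::real_normed_vector multiset"
  assumes "open J" "is_interval J"
    and good: "\<And>c d. c \<le> d \<Longrightarrow> {c..d} \<subseteq> J \<Longrightarrow> \<exists>fs. sel Q f {c..d} fs"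
  shows "\<exists>F. sel Q f J F"
proof (cases "J = {}")
  case True
  then show ?thesis unfolding sel_def by auto
next
  case False
  then obtain x0 where x0: "x0 \<in> J" by blast
  obtain c :: "nat \<Rightarrow> real" where c: "\<forall>k. c (Suc k) \<le> c k" "\<forall>k. c k \<in> J \<and> c k \<le> x0"
    "\<forall>y\<in>J. \<exists>k. c k < y"
    using seq_left[OF assms(1,2) x0] by blast
  obtain d :: "nat \<Rightarrow> real" where d: "\<forall>k. d k \<le> d (Suc k)" "\<forall>k. d k \<in> J \<and> x0 \<le> d k"
    "\<forall>y\<in>J. \<exists>k. y < d k"
    using seq_right[OF assms(1,2) x0] by blast
  define K where "K = (\<lambda>k. {c k..d k})"
  have cd: "c k \<le> d k" for k using c(2) d(2) by (meson order_trans)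
  have ivl: "\<And>a b x. a \<in> J \<Longrightarrow> b \<in> J \<Longrightarrow> a \<le> x \<and> x \<le> b \<Longrightarrow> x \<in> J"
    using is_interval_1[THEN iffD1, OF assms(2), rule_format] by blast
  have KJ: "K k \<subseteq> J" for k
  proof
    fix x assume "x \<in> K k"
    then have "c k \<le> x \<and> x \<le> d k" unfolding K_def by auto
    moreover have "c k \<in> J" "d k \<in> J" using c(2) d(2) by auto
    ultimately show "x \<in> J" using ivl by blast
  qed
  have Kgood: "\<exists>fs. sel Q f (K k) fs" for k unfolding K_def by (rule good[OF cd KJ[unfolded K_def]])
  have Kext: "\<exists>F. sel Q f (K (Suc k)) F \<and> (\<forall>i<Q. \<forall>y\<in>K k. F i y = g i y)"
    if "sel Q f (K k) g" for k g
  proof -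
    obtain h where h: "sel Q f (K (Suc k)) h" using Kgood by blast
    show ?thesis unfolding K_def
      by (rule sel_ext) (use c(1) d(1) cd that h in \<open>auto simp: K_def\<close>)
  qed
  define G where "G = rec_nat (SOME fs. sel Q f (K 0) fs)
      (\<lambda>k Gk. SOME F. sel Q f (K (Suc k)) F \<and> (\<forall>i<Q. \<forall>y\<in>K k. F i y = Gk i y))"
  have G0: "G 0 = (SOME fs. sel Q f (K 0) fs)" unfolding G_def by simp
  have GS: "G (Suc k) = (SOME F. sel Q f (K (Suc k)) F \<and> (\<forall>i<Q. \<forall>y\<in>K k. F i y = G k i y))" for k
    unfolding G_def by simp
  have Gsel: "sel Q f (K k) (G k)" for k
  proof (induction k)
    case 0 then show ?case unfolding G0 using Kgood[of 0] by (rule someI_ex)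
  next
    case (Suc k)
    have "sel Q f (K (Suc k)) (G (Suc k)) \<and> (\<forall>i<Q. \<forall>y\<in>K k. G (Suc k) i y = G k i y)"
      unfolding GS by (rule someI_ex[OF Kext[OF Suc]])
    then show ?case by blast
  qed
  have Gstep: "\<forall>i<Q. \<forall>y\<in>K k. G (Suc k) i y = G k i y" for k
  proof -
    have "sel Q f (K (Suc k)) (G (Suc k)) \<and> (\<forall>i<Q. \<forall>y\<in>K k. G (Suc k) i y = G k i y)"
      unfolding GS by (rule someI_ex[OF Kext[OF Gsel]])
    then show ?thesis by blast
  qed
  have cmono: "c m \<le> c k" if "k \<le> m" for k m
    using that c(1) by (induction rule: dec_induct) (auto intro: order_trans)
  have dmono: "d k \<le> d m" if "k \<le> m" for k m
    using that d(1) by (induction rule: dec_induct) (auto intro: order_trans)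
  have Kmono: "K k \<subseteq> K m" if "k \<le> m" for k m
    using cmono[OF that] dmono[OF that] unfolding K_def by auto
  have Gagree: "\<forall>i<Q. \<forall>y\<in>K k. G m i y = G k i y" if "k \<le> m" for k m
    using that
  proof (induction rule: dec_induct)
    case base then show ?case by simp
  next
    case (step m)
    then show ?case using Gstep[of m] Kmono[OF step(1)] by auto
  qed
  define N where "N = (\<lambda>y. LEAST k. c k < y \<and> y < d k)"
  have Nex: "\<exists>k. c k < y \<and> y < d k" if "y \<in> J" for y
  proof -
    have e1: "\<exists>k. c k < y" by (rule c(3)[rule_format, OF that])
    have e2: "\<exists>k. y < d k" by (rule d(3)[rule_format, OF that])
    obtain k1 where k1: "c k1 < y" using e1 by blast
    obtain k2 where k2: "y < d k2" using e2 by blast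
    note k = k1 k2
    have "c (max k1 k2) \<le> c k1" by (rule cmono) simp
    moreover have "d k2 \<le> d (max k1 k2)" by (rule dmono) simp
    ultimately show ?thesis using k by (intro exI[of _ "max k1 k2"]) linarith
  qed
  have NI: "c (N y) < y \<and> y < d (N y)" if "y \<in> J" for y
    unfolding N_def by (rule LeastI_ex[OF Nex[OF that]])
  define F where "F = (\<lambda>i y. G (N y) i y)"
  have Floc: "F i z = G (N y) i z" if "y \<in> J" "i < Q" "z \<in> {c (N y)<..<d (N y)}" for y z i
  proof -
    have zN: "N z \<le> N y"
    proof -
      have "c (N y) < z \<and> z < d (N y)" using that(3) by simp
      then have "(LEAST k. c k < z \<and> z < d k) \<le> N y" by (rule Least_le)
      then show ?thesis by (simp add: N_def)
    qed
    have "z \<in> J" using that KJ[of "N y"] unfolding K_def by auto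
    then have "z \<in> K (N z)" using NI[of z] unfolding K_def by auto
    then show ?thesis unfolding F_def using Gagree[OF zN] that(2) by auto
  qed
  have "continuous_on J (F i)" if i: "i < Q" for i
  proof (rule continuous_at_imp_continuous_on, rule ballI)
    fix y assume y: "y \<in> J"
    show "isCont (F i) y"
    proof (rule isCont_local[of "{c (N y)<..<d (N y)}"])
      show "continuous_on {c (N y)<..<d (N y)} (G (N y) i)"
        using Gsel[of "N y"] i unfolding sel_def K_def
        by (meson continuous_on_subset greaterThanLessThan_subseteq_atLeastAtMost_iff order_refl)
      show "open {c (N y)<..<d (N y)}" by simp
      show "y \<in> {c (N y)<..<d (N y)}" using NI[OF y] by simp
      show "\<And>z. z \<in> {c (N y)<..<d (N y)} \<Longrightarrow> F i z = G (N y) i z" by (rule Floc[OF y i])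
    qed
  qed
  moreover have "f y = qpt Q F y" if y: "y \<in> J" for y
  proof -
    have "y \<in> K (N y)" using NI[OF y] unfolding K_def by auto
    then have "f y = qpt Q (G (N y)) y" using Gsel[of "N y"] unfolding sel_def by auto
    also have "\<dots> = qpt Q F y" by (rule qpt_cong) (simp add: F_def)
    finally show ?thesis .
  qed
  ultimately show ?thesis unfolding sel_def by blast
qed


definition SELP :: "nat \<Rightarrow> 'a::real_normed_vector itself \<Rightarrow> bool" where
  "SELP Q T \<longleftrightarrow> (\<forall>f :: real \<Rightarrow> 'a multiset. (\<forall>y. size (f y) = Q) \<longrightarrow> qcontinuous_on UNIV f
      \<longrightarrow> (\<exists>F. sel Q f UNIV F))"

lemma qcont_mono: "qcontinuous_on S f \<Longrightarrow> T \<subseteq> S \<Longrightarrow> qcontinuous_on T f"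
  unfolding qcontinuous_on_def by (meson subsetD)

lemma clamp_le: "\<bar>max c (min d y) - max c (min d x)\<bar> \<le> \<bar>y - x\<bar>" for c d x y :: real
  by (auto simp: max_def min_def abs_real_def)

lemma SELI:
  fixes f :: "real \<Rightarrow> 'a::real_normed_vector multiset"
  assumes "SELP Q TYPE('a)" "c \<le> d" "\<forall>y\<in>{c..d}. size (f y) = Q" "qcontinuous_on {c..d} f"
  shows "\<exists>F. sel Q f {c..d} F"
proof -
  define g where "g = (\<lambda>y. f (max c (min d y)))"
  have cl: "max c (min d y) \<in> {c..d}" for y using assms(2) by auto
  have "\<forall>y. size (g y) = Q" using assms(3) cl unfolding g_def by blast
  moreover have "qcontinuous_on UNIV g"
    unfolding qcontinuous_on_def
  proof (intro ballI allI impI)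
    fix x :: real and e :: real assume e: "e > 0"
    obtain dl where dl: "dl > 0" "\<forall>y\<in>{c..d}. \<bar>y - max c (min d x)\<bar> < dl \<longrightarrow>
        Gdist (f y) (f (max c (min d x))) < e"
      using assms(4) cl[of x] e unfolding qcontinuous_on_def by meson
    show "\<exists>dl>0. \<forall>y\<in>UNIV. \<bar>y - x\<bar> < dl \<longrightarrow> Gdist (g y) (g x) < e"
    proof (intro exI[of _ dl] conjI ballI impI)
      fix y :: real assume "\<bar>y - x\<bar> < dl"
      then have "\<bar>max c (min d y) - max c (min d x)\<bar> < dl" using clamp_le[of c d y x] by linarith
      then show "Gdist (g y) (g x) < e" unfolding g_def using dl(2) cl[of y] by blast
    qed (rule dl(1))
  qed
  ultimately obtain F where F: "sel Q g UNIV F" using assms(1) unfolding SELP_def by blast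
  have "sel Q f {c..d} F" unfolding sel_def
  proof (intro conjI allI impI ballI)
    fix i assume "i < Q"
    then show "continuous_on {c..d} (F i)" using F unfolding sel_def by (meson continuous_on_subset subset_UNIV)
  next
    fix y assume y: "y \<in> {c..d}"
    then have "g y = f y" unfolding g_def by simp
    then show "f y = qpt Q F y" using F unfolding sel_def by simp
  qed
  then show ?thesis by blast
qed

lemma all_eq_replicate:
  assumes "\<And>x. x \<in># M \<Longrightarrow> x = p"
  shows "M = replicate_mset (size M) p"
proof -
  have "count M x = count (filter_mset (\<lambda>x. x = p) M) x" for x
  proof (cases "x = p")
    case True then show ?thesis by simp
  next
    case False
    then have "x \<notin># M" using assms by blast
    then show ?thesis using False by (simp add: not_in_iff)
  qed
  then have "M = filter_mset (\<lambda>x. x = p) M" by (rule multiset_eqI)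
  then have "M = replicate_mset (count M p) p" by (metis filter_eq_replicate_mset)
  then show ?thesis by (metis size_replicate_mset)
qed

lemma filt_cont:
  fixes f :: "real \<Rightarrow> 'a::real_normed_vector multiset"
  assumes "\<forall>z\<in>S. size (f z) = Q" "qcontinuous_on S f" "\<epsilon> > 0"
    and eqv: "\<And>z z' w w'. z \<in> S \<Longrightarrow> z' \<in> S \<Longrightarrow> w \<in># f z \<Longrightarrow> w' \<in># f z' \<Longrightarrow>
              norm (w - w') < \<epsilon> \<Longrightarrow> (P w \<longleftrightarrow> P w')"
  shows "qcontinuous_on S (\<lambda>z. filter_mset P (f z))"
  unfolding qcontinuous_on_def
proof (intro ballI allI impI)
  fix x e assume x: "x \<in> S" and e: "(e::real) > 0"
  have me: "min e \<epsilon> > 0" using e assms(3) by simp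
  have "\<exists>dl>0. \<forall>y\<in>S. \<bar>y - x\<bar> < dl \<longrightarrow> Gdist (f y) (f x) < min e \<epsilon>"
    using assms(2)[unfolded qcontinuous_on_def, rule_format, OF x me] .
  then obtain dl where dl: "dl > 0" "\<forall>y\<in>S. \<bar>y - x\<bar> < dl \<longrightarrow> Gdist (f y) (f x) < min e \<epsilon>"
    by blast
  show "\<exists>dl>0. \<forall>y\<in>S. \<bar>y - x\<bar> < dl \<longrightarrow> Gdist (filter_mset P (f y)) (filter_mset P (f x)) < e"
  proof (intro exI[of _ dl] conjI ballI impI)
    fix y assume y: "y \<in> S" "\<bar>y - x\<bar> < dl"
    have G: "Gdist (f y) (f x) < min e \<epsilon>" using dl(2) y by blast
    have sz: "size (f y) = size (f x)" using assms(1) x y by simp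
    obtain as bs where m: "mset as = f y" "mset bs = f x" "length as = length bs"
      "Gdist (f y) (f x) = costz (zip as bs)" by (rule Gdist_att[OF sz])
    have "P (fst zz) \<longleftrightarrow> P (snd zz)" if zz: "zz \<in> set (zip as bs)" for zz
    proof (rule eqv[OF y(1) x])
      show "fst zz \<in># f y" using zz m(1) by (metis set_mset_mset set_zip_leftD surjective_pairing)
      show "snd zz \<in># f x" using zz m(2) by (metis set_mset_mset set_zip_rightD surjective_pairing)
      show "norm (fst zz - snd zz) < \<epsilon>" using costz_pair[OF zz] m(4) G by linarith
    qed
    then have "Gdist (filter_mset P (f y)) (filter_mset P (f x)) \<le> costz (zip as bs)"
      by (rule FILT(1)[OF m(1-3)])
    then show "Gdist (filter_mset P (f y)) (filter_mset P (f x)) < e" using m(4) G by linarith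
  qed (rule dl(1))
qed

lemma filt_size:
  fixes A B :: "'a::real_normed_vector multiset"
  assumes "size A = size B" "Gdist A B < \<epsilon>"
    and eqv: "\<And>w u. w \<in># A \<Longrightarrow> u \<in># B \<Longrightarrow> norm (w - u) < \<epsilon> \<Longrightarrow> (P w \<longleftrightarrow> P' u)"
  shows "size (filter_mset P A) = size (filter_mset P' B)"
proof -
  obtain as bs where m: "mset as = A" "mset bs = B" "length as = length bs"
    "Gdist A B = costz (zip as bs)" by (rule Gdist_att[OF assms(1)])
  have "P (fst zz) \<longleftrightarrow> P' (snd zz)" if zz: "zz \<in> set (zip as bs)" for zz
  proof (rule eqv)
    show "fst zz \<in># A" using zz m(1) by (metis set_mset_mset set_zip_leftD surjective_pairing)
    show "snd zz \<in># B" using zz m(2) by (metis set_mset_mset set_zip_rightD surjective_pairing)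
    show "norm (fst zz - snd zz) < \<epsilon>" using costz_pair[OF zz] m(4) assms(2) by linarith
  qed
  then show ?thesis by (rule FILT(2)[OF m(1-3)])
qed

lemma sel_union:
  assumes "a \<le> b" "c \<le> d" "a \<le> d" "c \<le> b" "sel Q f {a..b} F" "sel Q f {c..d} G"
  shows "\<exists>H. sel Q f {min a c..max b d} H"
proof (cases "a \<le> c")
  case True
  show ?thesis
  proof (cases "d \<le> b")
    case True
    then show ?thesis using assms \<open>a \<le> c\<close> by (intro exI[of _ F]) simp
  next
    case False
    have "sel Q f {b..d} G" by (rule sel_mono[OF assms(6)]) (use assms in auto)
    moreover have "b \<le> d" using False by simp
    ultimately obtain H where "sel Q f {a..d} H" using glue_R[OF assms(1) _ assms(5)] by blast
    then show ?thesis using False \<open>a \<le> c\<close> by (intro exI[of _ H]) simp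
  qed
next
  case False
  show ?thesis
  proof (cases "b \<le> d")
    case True
    then show ?thesis using assms False by (intro exI[of _ G]) simp
  next
    case nb: False
    have "sel Q f {a..b} F" by (rule assms(5))
    have "sel Q f {d..b} F" by (rule sel_mono[OF assms(5)]) (use assms in auto)
    moreover have "d \<le> b" using nb by simp
    ultimately obtain H where "sel Q f {c..b} H" using glue_R[OF assms(2) _ assms(6)] by blast
    then show ?thesis using nb False by (intro exI[of _ H]) simp
  qed
qed

lemma compact_good:
  fixes f :: "real \<Rightarrow> 'a::real_normed_vector multiset"
  assumes "c \<le> d"
    and loc: "\<And>x. x \<in> {c..d} \<Longrightarrow> \<exists>e>0. \<exists>F. sel Q f {x-e..x+e} F"
    and sz: "\<forall>y\<in>{c..d}. size (f y) = Q"
  shows "\<exists>F. sel Q f {c..d} F"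
proof -
  define R where "R = (\<lambda>x z. \<exists>F. sel Q f {min x z..max x z} F)"
  have "R c d"
  proof (rule connected_equivalence_relation[of "{c..d}"])
    show "connected {c..d}" by simp
    show "c \<in> {c..d}" "d \<in> {c..d}" using assms(1) by auto
    show "R y x" if "R x y" for x y using that unfolding R_def by (simp add: min.commute max.commute)
    show "R x z" if r: "R x y" "R y z" for x y z
    proof -
      obtain F1 where F1: "sel Q f {min x y..max x y} F1" using r(1) unfolding R_def by blast
      obtain F2 where F2: "sel Q f {min y z..max y z} F2" using r(2) unfolding R_def by blast
      obtain H where H: "sel Q f {min (min x y) (min y z)..max (max x y) (max y z)} H"
        using sel_union[OF _ _ _ _ F1 F2] by fastforce
      have "sel Q f {min x z..max x z} H" by (rule sel_mono[OF H]) auto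
      then show ?thesis unfolding R_def by blast
    qed
    fix x assume x: "x \<in> {c..d}"
    obtain e F where eF: "e > 0" "sel Q f {x-e..x+e} F" using loc[OF x] by blast
    show "\<exists>T. openin (top_of_set {c..d}) T \<and> x \<in> T \<and> (\<forall>z\<in>T. R x z)"
    proof (intro exI[of _ "{c..d} \<inter> ball x e"] conjI ballI)
      show "openin (top_of_set {c..d}) ({c..d} \<inter> ball x e)"
        by (simp add: openin_open_Int)
      show "x \<in> {c..d} \<inter> ball x e" using x eF(1) by simp
      fix z assume "z \<in> {c..d} \<inter> ball x e"
      then have "dist x z < e" by simp
      then have "{min x z..max x z} \<subseteq> {x-e..x+e}" by (auto simp: dist_real_def)
      then show "R x z" unfolding R_def using sel_mono[OF eF(2)] by blast
    qed
  qed
  then show ?thesis unfolding R_def using assms(1) by simp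
qed


lemma nd: "\<bar>norm (w - p) - norm (u - p)\<bar> \<le> norm (w - u)" for w u p :: "'a::real_normed_vector"
  using norm_triangle_ineq3[of "w - p" "u - p"] by simp

lemma local_split:
  fixes f :: "real \<Rightarrow> 'a::real_normed_vector multiset"
  assumes IH: "\<forall>Q'<Q. SELP Q' TYPE('a)"
    and sz: "\<forall>y. size (f y) = Q" and qc: "qcontinuous_on UNIV f"
    and p: "p \<in># f y" and q: "q \<in># f y" and pq: "p \<noteq> q"
  shows "\<exists>e>0. \<exists>F. sel Q f {y-e..y+e} F"
proof -
  define D where "D = set_mset (f y) - {p}"
  have finD: "finite D" unfolding D_def by simp
  have qD: "q \<in> D" unfolding D_def using q pq by simp
  define r where "r = Min ((\<lambda>u. norm (u - p)) ` D)"
  have rpos: "r > 0" unfolding r_def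
  proof (subst Min_gr_iff)
    show "finite ((\<lambda>u. norm (u - p)) ` D)" using finD by simp
    show "(\<lambda>u. norm (u - p)) ` D \<noteq> {}" using qD by blast
    show "\<forall>a\<in>(\<lambda>u. norm (u - p)) ` D. 0 < a" unfolding D_def by auto
  qed
  have rle: "r \<le> norm (u - p)" if "u \<in># f y" "u \<noteq> p" for u
    unfolding r_def using finD that by (auto simp: D_def)
  define \<epsilon> where "\<epsilon> = r / 4"
  have epos: "\<epsilon> > 0" unfolding \<epsilon>_def using rpos by simp
  have "\<exists>d>0. \<forall>z\<in>UNIV. \<bar>z - y\<bar> < d \<longrightarrow> Gdist (f z) (f y) < \<epsilon>"
    using qc[unfolded qcontinuous_on_def, rule_format, OF UNIV_I epos] .
  then obtain d0 where d0: "d0 > 0" "\<And>z. \<bar>z - y\<bar> < d0 \<Longrightarrow> Gdist (f z) (f y) < \<epsilon>" by blast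
  define e where "e = d0 / 2"
  have epos2: "e > 0" unfolding e_def using d0 by simp
  define S where "S = {y-e..y+e}"
  have zS: "Gdist (f z) (f y) < \<epsilon>" if "z \<in> S" for z
  proof -
    have "\<bar>z - y\<bar> < d0" using that d0(1) unfolding S_def e_def by (simp add: abs_less_iff)
    then show ?thesis by (rule d0(2))
  qed
  have NF: "norm (w - p) < \<epsilon> \<or> norm (w - p) > 3 * \<epsilon>" if z: "z \<in> S" "w \<in># f z" for z w
  proof -
    have "size (f z) = size (f y)" using sz by simp
    then obtain u where u: "u \<in># f y" "norm (w - u) \<le> Gdist (f z) (f y)" using PT z(2) by blast
    have wu: "norm (w - u) < \<epsilon>" using u(2) zS[OF z(1)] by linarith
    show ?thesis
    proof (cases "u = p")
      case True then show ?thesis using wu by simp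
    next
      case False
      have "r \<le> norm (u - p)" by (rule rle[OF u(1) False])
      then show ?thesis using nd[of w p u] wu unfolding \<epsilon>_def by linarith
    qed
  qed
  define P where "P = (\<lambda>w. norm (w - p) < 2 * \<epsilon>)"
  have eqv: "P w \<longleftrightarrow> P w'" if "z \<in> S" "z' \<in> S" "w \<in># f z" "w' \<in># f z'" "norm (w - w') < \<epsilon>"
    for z z' w w'
  proof -
    have "\<bar>norm (w - p) - norm (w' - p)\<bar> \<le> norm (w - w')" by (rule nd)
    then show ?thesis using NF[OF that(1,3)] NF[OF that(2,4)] that(5) unfolding P_def by linarith
  qed
  have eqv': "(\<not> P w) \<longleftrightarrow> (\<not> P w')" if "z \<in> S" "z' \<in> S" "w \<in># f z" "w' \<in># f z'" "norm (w - w') < \<epsilon>"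
    for z z' w w' using eqv[OF that] by simp
  have szS: "\<forall>z\<in>S. size (f z) = Q" using sz by simp
  have qcS: "qcontinuous_on S f" by (rule qcont_mono[OF qc]) simp
  define A where "A = (\<lambda>z. filter_mset P (f z))"
  define B where "B = (\<lambda>z. filter_mset (\<lambda>w. \<not> P w) (f z))"
  have qcA: "qcontinuous_on S A" unfolding A_def by (rule filt_cont[OF szS qcS epos eqv]) auto
  have qcB: "qcontinuous_on S B" unfolding B_def by (rule filt_cont[OF szS qcS epos eqv']) auto
  define k where "k = count (f y) p"
  have szpart: "size (f y) = size (filter_mset (\<lambda>u. u = p) (f y)) + size (filter_mset (\<lambda>u. \<not> u = p) (f y))"
    by (metis multiset_partition size_union)
  have cnt: "size (filter_mset (\<lambda>u. u = p) (f y)) = k" unfolding k_def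
    by (simp add: filter_eq_replicate_mset)
  have qin: "q \<in># filter_mset (\<lambda>u. \<not> u = p) (f y)" using q pq by simp
  then have "size (filter_mset (\<lambda>u. \<not> u = p) (f y)) > 0"
    by (metis gr0I multiset_nonemptyE size_eq_0_iff_empty empty_iff set_mset_empty)
  then have kQ: "k < Q" using szpart cnt sz by simp
  have k0: "0 < k" unfolding k_def using p by simp
  have szA: "size (A z) = k" if z: "z \<in> S" for z
  proof -
    have "size (filter_mset P (f z)) = size (filter_mset (\<lambda>u. u = p) (f y))"
    proof (rule filt_size)
      show "size (f z) = size (f y)" using sz by simp
      show "Gdist (f z) (f y) < \<epsilon>" by (rule zS[OF z])
      fix w u assume wu: "w \<in># f z" "u \<in># f y" "norm (w - u) < \<epsilon>"
      show "P w \<longleftrightarrow> u = p"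
      proof (cases "u = p")
        case True then show ?thesis using wu(3) epos unfolding P_def by simp
      next
        case False
        have "r \<le> norm (u - p)" by (rule rle[OF wu(2) False])
        then show ?thesis using nd[of w p u] wu(3) False unfolding P_def \<epsilon>_def by linarith
      qed
    qed
    then show ?thesis unfolding A_def using cnt by simp
  qed
  have szB: "size (B z) = Q - k" if z: "z \<in> S" for z
  proof -
    have "size (filter_mset (\<lambda>w. \<not> P w) (f z)) = size (filter_mset (\<lambda>u. \<not> u = p) (f y))"
    proof (rule filt_size)
      show "size (f z) = size (f y)" using sz by simp
      show "Gdist (f z) (f y) < \<epsilon>" by (rule zS[OF z])
      fix w u assume wu: "w \<in># f z" "u \<in># f y" "norm (w - u) < \<epsilon>"
      show "(\<not> P w) \<longleftrightarrow> (\<not> u = p)"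
      proof (cases "u = p")
        case True then show ?thesis using wu(3) epos unfolding P_def by simp
      next
        case False
        have "r \<le> norm (u - p)" by (rule rle[OF wu(2) False])
        then show ?thesis using nd[of w p u] wu(3) False unfolding P_def \<epsilon>_def by linarith
      qed
    qed
    then show ?thesis unfolding B_def using szpart cnt sz by simp
  qed
  have le: "y - e \<le> y + e" using epos2 by simp
  obtain FA where FA: "sel k A S FA"
    using SELI[where Q=k and f=A and c="y-e" and d="y+e"] IH kQ le szA qcA unfolding S_def by blast
  obtain FB where FB: "sel (Q - k) B S FB"
  proof -
    have "Q - k < Q" using k0 kQ by simp
    then have "SELP (Q - k) TYPE('a)" using IH by blast
    then show ?thesis using that SELI[where Q="Q-k" and f=B and c="y-e" and d="y+e"] le szB qcB
      unfolding S_def by blast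
  qed
  define F where "F = (\<lambda>i. if i < k then FA i else FB (i - k))"
  have "sel Q f S F" unfolding sel_def
  proof (intro conjI allI impI ballI)
    fix i assume i: "i < Q"
    show "continuous_on S (F i)"
    proof (cases "i < k")
      case True then show ?thesis using FA unfolding sel_def F_def by simp
    next
      case False
      then have "i - k < Q - k" using i by simp
      then show ?thesis using FB False unfolding sel_def F_def by simp
    qed
  next
    fix z assume z: "z \<in> S"
    have "f z = A z + B z" unfolding A_def B_def by (rule multiset_partition)
    also have "\<dots> = qpt k FA z + qpt (Q - k) FB z" using FA FB z unfolding sel_def by simp
    also have "\<dots> = qpt Q F z" unfolding F_def using qpt_split[of k Q FA FB z] kQ by simp
    finally show "f z = qpt Q F z" .
  qed
  then show ?thesis using epos2 unfolding S_def by blast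
qed


lemma SEL_step:
  assumes IH: "\<forall>Q'<Q. SELP Q' TYPE('a::real_normed_vector)"
  shows "SELP Q TYPE('a)"
  unfolding SELP_def
proof (intro allI impI)
  fix f :: "real \<Rightarrow> 'a multiset"
  assume sz: "\<forall>y. size (f y) = Q" and qc: "qcontinuous_on UNIV f"
  show "\<exists>F. sel Q f UNIV F"
  proof (cases "Q = 0")
    case True
    have "f y = qpt Q (\<lambda>i y. 0) y" for y using sz True by (simp add: qpt_def)
    then have "sel Q f UNIV (\<lambda>i y. 0)" unfolding sel_def using True by simp
    then show ?thesis by blast
  next
    case False
    define C where "C = {y. \<exists>p. f y = replicate_mset Q p}"
    have notC: "\<exists>p q. p \<in># f y \<and> q \<in># f y \<and> p \<noteq> q" if "y \<notin> C" for y
    proof (rule ccontr)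
      assume H: "\<not> (\<exists>p q. p \<in># f y \<and> q \<in># f y \<and> p \<noteq> q)"
      have "f y \<noteq> {#}" using sz False by (metis size_empty)
      then obtain p where p: "p \<in># f y" by (meson multiset_nonemptyE)
      have "\<And>x. x \<in># f y \<Longrightarrow> x = p" using H p by blast
      then have "f y = replicate_mset (size (f y)) p" by (rule all_eq_replicate)
      then have "y \<in> C" unfolding C_def using sz by auto
      then show False using that by blast
    qed
    have loc: "\<exists>e>0. \<exists>F. sel Q f {y-e..y+e} F" if yC: "y \<notin> C" for y
    proof -
      obtain p q where pq: "p \<in># f y" "q \<in># f y" "p \<noteq> q" using notC[OF yC] by blast
      show ?thesis by (rule local_split[OF IH sz qc pq])
    qed
    have openC: "open (- C)"
      unfolding open_contains_ball
    proof (intro ballI)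
      fix y assume y: "y \<in> - C"
      obtain p q where pq: "p \<in># f y" "q \<in># f y" "p \<noteq> q" using notC y by blast
      define r where "r = norm (p - q)"
      have rpos: "r / 2 > 0" unfolding r_def using pq(3) by simp
      have "\<exists>d>0. \<forall>z\<in>UNIV. \<bar>z - y\<bar> < d \<longrightarrow> Gdist (f z) (f y) < r / 2"
        using qc[unfolded qcontinuous_on_def, rule_format, OF UNIV_I rpos] .
      then obtain d where d: "d > 0" "\<And>z. \<bar>z - y\<bar> < d \<Longrightarrow> Gdist (f z) (f y) < r / 2" by blast
      have "ball y d \<subseteq> - C"
      proof
        fix z assume z: "z \<in> ball y d"
        then have zy: "\<bar>z - y\<bar> < d" by (simp add: dist_real_def abs_minus_commute)
        show "z \<in> - C"
        proof
          assume "z \<in> C"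
          then obtain w where w: "f z = replicate_mset Q w" unfolding C_def by blast
          have szz: "size (f z) = size (f y)" using sz by simp
          obtain w1 where w1: "w1 \<in># f z" "norm (w1 - p) \<le> Gdist (f z) (f y)"
            using PT2[OF szz pq(1)] by blast
          obtain w2 where w2: "w2 \<in># f z" "norm (w2 - q) \<le> Gdist (f z) (f y)"
            using PT2[OF szz pq(2)] by blast
          have "w1 = w" "w2 = w" using w1(1) w2(1) w by (auto split: if_splits)
          then have "norm (w - p) < r / 2" "norm (w - q) < r / 2" using w1 w2 d(2)[OF zy] by auto
          moreover have "r \<le> norm (w - p) + norm (w - q)"
          proof -
            have "norm (p - q) \<le> norm (p - w) + norm (w - q)"
              using norm_triangle_ineq[of "p - w" "w - q"] by simp
            then show ?thesis unfolding r_def by (simp add: norm_minus_commute)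
          qed
          ultimately show False by linarith
        qed
      qed
      then show "\<exists>e>0. ball y e \<subseteq> - C" using d(1) by blast
    qed
    define comp where "comp = (\<lambda>y. connected_component_set (- C) y)"
    have comp_open: "open (comp y)" for y unfolding comp_def by (rule open_connected_component[OF openC])
    have comp_ivl: "is_interval (comp y)" for y unfolding comp_def
      by (simp add: is_interval_connected_1)
    have comp_sub: "comp y \<subseteq> - C" for y unfolding comp_def by (rule connected_component_subset)
    have comp_good: "\<exists>F. sel Q f (comp y) F" for y
    proof (rule EXH[OF comp_open comp_ivl])
      fix c d assume cd: "c \<le> d" "{c..d} \<subseteq> comp y"
      show "\<exists>fs. sel Q f {c..d} fs"
      proof (rule compact_good[OF cd(1)])
        fix x assume "x \<in> {c..d}"
        then have "x \<notin> C" using cd(2) comp_sub by blast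
        then show "\<exists>e>0. \<exists>F. sel Q f {x - e..x + e} F" by (rule loc)
      qed (use sz in simp)
    qed
    define selJ where "selJ = (\<lambda>J. SOME F. sel Q f J F)"
    have selJ: "sel Q f (comp y) (selJ (comp y))" for y
      unfolding selJ_def by (rule someI_ex[OF comp_good])
    define F where "F = (\<lambda>i y. if y \<in> C then (SOME p. f y = replicate_mset Q p) else selJ (comp y) i y)"
    have yin: "y \<in> comp y" if "y \<notin> C" for y
      unfolding comp_def using that by (simp add: connected_component_refl)
    have compeq: "comp z = comp y" if "z \<in> comp y" for y z
      unfolding comp_def by (rule connected_component_eq) (use that in \<open>simp add: comp_def\<close>)
    have Feq: "F i z = selJ (comp y) i z" if "z \<in> comp y" for y z i
    proof -
      have "z \<notin> C" using that comp_sub by blast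
      then show ?thesis unfolding F_def using compeq[OF that] by simp
    qed
    have Fsel: "f y = qpt Q F y" for y
    proof (cases "y \<in> C")
      case True
      then have ex: "\<exists>p. f y = replicate_mset Q p" unfolding C_def by blast
      define p where "p = (SOME p. f y = replicate_mset Q p)"
      have fp: "f y = replicate_mset Q p" unfolding p_def by (rule someI_ex[OF ex])
      have "qpt Q F y = qpt Q (\<lambda>i _. p) y" by (rule qpt_cong) (simp add: F_def True p_def)
      then show ?thesis using fp qpt_const by metis
    next
      case False
      have "f y = qpt Q (selJ (comp y)) y" using selJ[of y] yin[OF False] unfolding sel_def by blast
      also have "\<dots> = qpt Q F y" by (rule qpt_cong) (simp add: Feq[OF yin[OF False]])
      finally show ?thesis .
    qed
    have "isCont (F i) y" if i: "i < Q" for i y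
    proof (cases "y \<in> C")
      case False
      show ?thesis
      proof (rule isCont_local[OF comp_open yin[OF False]])
        show "\<And>z. z \<in> comp y \<Longrightarrow> F i z = selJ (comp y) i z" by (rule Feq)
        show "continuous_on (comp y) (selJ (comp y) i)" using selJ[of y] i unfolding sel_def by blast
      qed
    next
      case True
      then have ex: "\<exists>p. f y = replicate_mset Q p" unfolding C_def by blast
      define p where "p = (SOME p. f y = replicate_mset Q p)"
      have fp: "f y = replicate_mset Q p" unfolding p_def by (rule someI_ex[OF ex])
      have Fy: "F i y = p" unfolding F_def p_def using True by simp
      show ?thesis unfolding continuous_at_eps_delta
      proof (intro allI impI)
        fix e :: real assume e: "e > 0"
        have "\<exists>d>0. \<forall>z\<in>UNIV. \<bar>z - y\<bar> < d \<longrightarrow> Gdist (f z) (f y) < e"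
          using qc[unfolded qcontinuous_on_def, rule_format, OF UNIV_I e] .
        then obtain d where d: "d > 0" "\<And>z. \<bar>z - y\<bar> < d \<Longrightarrow> Gdist (f z) (f y) < e" by blast
        show "\<exists>d>0. \<forall>x'. dist x' y < d \<longrightarrow> dist (F i x') (F i y) < e"
        proof (intro exI[of _ d] conjI allI impI)
          fix z assume "dist z y < d"
          then have zy: "\<bar>z - y\<bar> < d" by (simp add: dist_real_def)
          have mem: "F i z \<in># f z" using Fsel[of z] qpt_mem[OF i, of F z] by simp
          have szz: "size (f z) = size (f y)" using sz by simp
          obtain u where u: "u \<in># f y" "norm (F i z - u) \<le> Gdist (f z) (f y)"
            using PT[OF szz mem] by blast
          have "u = p" using u(1) fp by (auto split: if_splits)
          then show "dist (F i z) (F i y) < e" using u(2) d(2)[OF zy] Fy by (simp add: dist_norm)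
        qed (rule d(1))
      qed
    qed
    then have "sel Q f UNIV F" unfolding sel_def using Fsel
      by (simp add: continuous_at_imp_continuous_on)
    then show ?thesis by blast
  qed
qed

lemma SEL_all: "SELP Q TYPE('a::real_normed_vector)"
proof (induction Q rule: less_induct)
  case (less Q)
  then show ?case using SEL_step by blast
qed


theorem theorem5p2:
  fixes f :: "real \<Rightarrow> (real ^ 'n) multiset" and Q :: nat and a b x0 :: real
  assumes "\<forall>x\<in>{a..b}. size (f x) = Q"
    and "qcontinuous_on {a..b} f"
    and "x0 \<in> {a<..<b}"
    and "strongly_affinely_approximatable Q {a..b} f x0"
  shows "\<exists>fs :: nat \<Rightarrow> real \<Rightarrow> real ^ 'n.
           (\<forall>i<Q. continuous_on {a..b} (fs i)) \<and>
           (\<forall>x\<in>{a..b}. f x = qpt Q fs x) \<and>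
           (\<forall>i<Q. fs i differentiable (at x0))"
proof -
  have ab: "a \<le> b" using assms(3) by simp
  obtain F where F: "sel Q f {a..b} F" using SELI[OF SEL_all ab assms(1,2)] by blast
  obtain c v :: "nat \<Rightarrow> real ^ 'n" where
    lim0: "((\<lambda>x. Gdist (f x) (qpt Q (\<lambda>i x. c i + x *\<^sub>R v i) x) / \<bar>x - x0\<bar>) \<longlongrightarrow> 0) (at x0 within {a..b})"
    and strong: "\<forall>i<Q. \<forall>j<Q. c i + x0 *\<^sub>R v i = c j + x0 *\<^sub>R v j \<longrightarrow> c i = c j \<and> v i = v j"
    using assms(4) unfolding strongly_affinely_approximatable_def by blast
  define Af where "Af = (\<lambda>i (x::real). c i + x *\<^sub>R v i)"
  define G where "G = (\<lambda>x. Gdist (f x) (qpt Q Af x))"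
  have atx: "at x0 within {a..b} = at x0"
    by (rule at_within_interior) (use assms(3) in simp)
  have lim: "((\<lambda>x. G x / \<bar>x - x0\<bar>) \<longlongrightarrow> 0) (at x0)"
    using lim0 unfolding atx G_def Af_def .
  have evS: "eventually (\<lambda>x. x \<in> {a<..<b}) (at x0)"
    by (rule eventually_at_in_open') (use assms(3) in auto)
  have evne: "eventually (\<lambda>x. x \<noteq> x0) (at x0)"
    using eventually_at_in_open[of UNIV x0] by simp
  have Glim: "(G \<longlongrightarrow> 0) (at x0)"
  proof -
    have "((\<lambda>x. \<bar>x - x0\<bar>) \<longlongrightarrow> \<bar>x0 - x0\<bar>) (at x0)" by (intro tendsto_intros)
    then have t: "((\<lambda>x. \<bar>x - x0\<bar>) \<longlongrightarrow> 0) (at x0)" by simp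
    have "((\<lambda>x. G x / \<bar>x - x0\<bar> * \<bar>x - x0\<bar>) \<longlongrightarrow> 0 * 0) (at x0)"
      by (rule tendsto_mult[OF lim t])
    then have "((\<lambda>x. G x / \<bar>x - x0\<bar> * \<bar>x - x0\<bar>) \<longlongrightarrow> 0) (at x0)"
      by (simp only: mult_zero_left)
    moreover have "eventually (\<lambda>x. G x / \<bar>x - x0\<bar> * \<bar>x - x0\<bar> = G x) (at x0)"
      using evne by eventually_elim simp
    ultimately show ?thesis using Lim_transform_eventually by fastforce
  qed
  have diff: "F i differentiable (at x0)" if i: "i < Q" for i
  proof -
    have S1: "\<exists>j<Q. norm (F i x - Af j x) \<le> G x" if x: "x \<in> {a..b}" for x
    proof -
      have mem: "F i x \<in># f x" using F x qpt_mem[OF i, of F x] unfolding sel_def by simp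
      have szz: "size (f x) = size (qpt Q Af x)" using assms(1) x by simp
      obtain u where u: "u \<in># qpt Q Af x" "norm (F i x - u) \<le> G x"
        using PT[OF szz mem] unfolding G_def by blast
      then obtain j where "j < Q" "u = Af j x" unfolding qpt_set by blast
      then show ?thesis using u(2) by blast
    qed
    define p0 where "p0 = F i x0"
    have x0S: "x0 \<in> interior {a..b}" using assms(3) by simp
    have Fc: "isCont (F i) x0"
      using F i x0S continuous_on_interior unfolding sel_def by blast
    then have Flim: "(F i \<longlongrightarrow> p0) (at x0)" unfolding p0_def by (simp add: isCont_def)
    define Bad where "Bad = {j. j < Q \<and> Af j x0 \<noteq> p0}"
    have evbad: "eventually (\<lambda>x. \<forall>j\<in>Bad. G x < norm (F i x - Af j x)) (at x0)"
    proof (rule eventually_ball_finite)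
      show "finite Bad" unfolding Bad_def by simp
      show "\<forall>j\<in>Bad. eventually (\<lambda>x. G x < norm (F i x - Af j x)) (at x0)"
      proof
        fix j assume j: "j \<in> Bad"
        have "((\<lambda>x. norm (F i x - Af j x) - G x) \<longlongrightarrow> norm (p0 - Af j x0) - 0) (at x0)"
          unfolding Af_def by (intro tendsto_intros Flim Glim)
        moreover have "0 < norm (p0 - Af j x0) - 0"
        proof -
          have "Af j x0 \<noteq> p0" using j unfolding Bad_def by simp
          then have "p0 - Af j x0 \<noteq> 0" by simp
          then show ?thesis by simp
        qed
        ultimately have "eventually (\<lambda>x. 0 < norm (F i x - Af j x) - G x) (at x0)"
          by (rule order_tendstoD(1))
        then show "eventually (\<lambda>x. G x < norm (F i x - Af j x)) (at x0)"
          by eventually_elim simp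
      qed
    qed
    have evgood: "eventually (\<lambda>x. \<exists>j<Q. Af j x0 = p0 \<and> norm (F i x - Af j x) \<le> G x) (at x0)"
      using evbad evS
    proof eventually_elim
      case (elim x)
      then have "x \<in> {a..b}" by simp
      then obtain j where j: "j < Q" "norm (F i x - Af j x) \<le> G x" using S1 by blast
      have "Af j x0 = p0"
      proof (rule ccontr)
        assume "Af j x0 \<noteq> p0"
        then have "j \<in> Bad" using j(1) unfolding Bad_def by simp
        then show False using elim(1) j(2) by fastforce
      qed
      then show ?case using j by blast
    qed
    have "at x0 \<noteq> (bot :: real filter)" using trivial_limit_at by simp
    then obtain x1 where "\<exists>j<Q. Af j x0 = p0 \<and> norm (F i x1 - Af j x1) \<le> G x1"
      using eventually_happens'[OF _ evgood] by blast
    then obtain j0 where j0: "j0 < Q" "Af j0 x0 = p0" by blast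
    have same: "Af j = Af j0" if "j < Q" "Af j x0 = p0" for j
    proof -
      have "c j + x0 *\<^sub>R v j = c j0 + x0 *\<^sub>R v j0" using that j0 unfolding Af_def by simp
      then have "c j = c j0 \<and> v j = v j0" using strong that(1) j0(1) by blast
      then show ?thesis unfolding Af_def by simp
    qed
    have ev0: "eventually (\<lambda>x. norm (F i x - Af j0 x) \<le> G x) (at x0)"
      using evgood
    proof eventually_elim
      case (elim x)
      then obtain j where "j < Q" "Af j x0 = p0" "norm (F i x - Af j x) \<le> G x" by blast
      then show ?case using same by metis
    qed
    have "(F i has_derivative (\<lambda>h. h *\<^sub>R v j0)) (at x0)"
      unfolding has_derivative_iff_norm
    proof (intro conjI)
      show "bounded_linear (\<lambda>h. h *\<^sub>R v j0)" by (rule bounded_linear_scaleR_left)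
      have key: "F i y - F i x0 - (y - x0) *\<^sub>R v j0 = F i y - Af j0 y" for y
        using j0(2) unfolding p0_def Af_def by (simp add: algebra_simps)
      show "((\<lambda>y. norm (F i y - F i x0 - (y - x0) *\<^sub>R v j0) / norm (y - x0)) \<longlongrightarrow> 0) (at x0)"
      proof (rule Lim_null_comparison[OF _ lim])
        show "eventually (\<lambda>y. norm (norm (F i y - F i x0 - (y - x0) *\<^sub>R v j0) / norm (y - x0))
              \<le> G y / \<bar>y - x0\<bar>) (at x0)"
          using ev0
        proof eventually_elim
          case (elim y)
          then show ?case unfolding key by (simp add: divide_right_mono)
        qed
      qed
    qed
    then show ?thesis by (rule differentiableI)
  qed
  show ?thesis using F diff unfolding sel_def by blast
qed

end
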